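(* Let $A$ be a Prüfer domain with Noetherian prime spectrum (for example, a Dedekind domain), and let $B$ be an overring of $A$ finitely generated as an $A$-algebra. The following are equivalent: (1) $B$ is a localization of $A$; (2) $B$ is well-centered on $A$; (3) $B$ is almost well-centered on $A$.
   Context: For an integral domain $A$ with field of fractions $K$, an overring is a subring $B$ of $K$ containing $A$. $B$ is a localization of $A$ if $B=S^{-1}A$ for a multiplicatively closed set $S$ of nonzero elements of $A$. $B$ is well-centered on $A$ if for each $b\in B$ there is a unit $u$ of $B$ with $ub\in A$; $B$ is almost well-centered on $A$ if for each $b\in B$ there exist a positive integer $n$ and a unit $u$ of $B$ with $ub^n\in A$. *)

theory Defs
  imports Main
begin

text \<open>We work inside a field K (type 'k). An integral domain A is represented as a
subring of K whose field of fractions is K; overrings are subrings B with A \<subseteq> B \<subseteq> K.\<close>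

definition is_subring :: "'k::field set \<Rightarrow> bool" where
  "is_subring R \<longleftrightarrow> 0 \<in> R \<and> 1 \<in> R \<and>
     (\<forall>x\<in>R. \<forall>y\<in>R. x + y \<in> R \<and> x - y \<in> R \<and> x * y \<in> R)"

definition frac_field_of :: "'k::field set \<Rightarrow> bool" where
  "frac_field_of A \<longleftrightarrow> is_subring A \<and>
     (\<forall>x::'k. \<exists>a\<in>A. \<exists>b\<in>A. b \<noteq> 0 \<and> x = a / b)"

definition is_overring :: "'k::field set \<Rightarrow> 'k set \<Rightarrow> bool" where
  "is_overring A B \<longleftrightarrow> is_subring B \<and> A \<subseteq> B"

definition mod_span :: "'k::field set \<Rightarrow> 'k set \<Rightarrow> 'k set" where
  "mod_span A S = {x. \<exists>F c. finite F \<and> F \<subseteq> S \<and> (\<forall>s\<in>F. c s \<in> A) \<and>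
                          x = (\<Sum>s\<in>F. c s * s)}"

definition frac_mult :: "'k::field set \<Rightarrow> 'k set \<Rightarrow> 'k set \<Rightarrow> 'k set" where
  "frac_mult A I J = mod_span A {x * y | x y. x \<in> I \<and> y \<in> J}"

definition colon :: "'k::field set \<Rightarrow> 'k set \<Rightarrow> 'k set" where
  "colon A I = {x. \<forall>y\<in>I. x * y \<in> A}"

definition invertible_ideal :: "'k::field set \<Rightarrow> 'k set \<Rightarrow> bool" where
  "invertible_ideal A I \<longleftrightarrow> frac_mult A I (colon A I) = A"

definition pruefer :: "'k::field set \<Rightarrow> bool" where
  "pruefer A \<longleftrightarrow> (\<forall>F. finite F \<and> F \<subseteq> A \<and> F - {0} \<noteq> {} \<longrightarrow>
                        invertible_ideal A (mod_span A F))"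

definition is_ideal :: "'k::field set \<Rightarrow> 'k set \<Rightarrow> bool" where
  "is_ideal A I \<longleftrightarrow> I \<subseteq> A \<and> 0 \<in> I \<and> (\<forall>x\<in>I. \<forall>y\<in>I. x + y \<in> I) \<and>
                     (\<forall>a\<in>A. \<forall>x\<in>I. a * x \<in> I)"

definition radical_ideal :: "'k::field set \<Rightarrow> 'k set \<Rightarrow> bool" where
  "radical_ideal A I \<longleftrightarrow> is_ideal A I \<and> (\<forall>x\<in>A. \<forall>n::nat. x ^ n \<in> I \<longrightarrow> x \<in> I)"

text \<open>Noetherian prime spectrum: Spec A is a Noetherian topological space, i.e.
  DCC on closed subsets, i.e. ACC on radical ideals.\<close>
definition noetherian_spectrum :: "'k::field set \<Rightarrow> bool" where
  "noetherian_spectrum A \<longleftrightarrow>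
     (\<forall>f::nat \<Rightarrow> 'k set. (\<forall>n. radical_ideal A (f n)) \<and> (\<forall>n. f n \<subseteq> f (Suc n)) \<longrightarrow>
        (\<exists>N. \<forall>n\<ge>N. f n = f N))"

definition ring_gen :: "'k::field set \<Rightarrow> 'k set" where
  "ring_gen S = \<Inter>{R. is_subring R \<and> S \<subseteq> R}"

definition fin_gen_algebra :: "'k::field set \<Rightarrow> 'k set \<Rightarrow> bool" where
  "fin_gen_algebra A B \<longleftrightarrow> (\<exists>F. finite F \<and> F \<subseteq> B \<and> B = ring_gen (A \<union> F))"

definition is_localization :: "'k::field set \<Rightarrow> 'k set \<Rightarrow> bool" where
  "is_localization A B \<longleftrightarrow> (\<exists>S. S \<subseteq> A - {0} \<and> 1 \<in> S \<and> (\<forall>s\<in>S. \<forall>t\<in>S. s * t \<in> S) \<and>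
                              B = {a / s | a s. a \<in> A \<and> s \<in> S})"

definition ring_unit :: "'k::field set \<Rightarrow> 'k \<Rightarrow> bool" where
  "ring_unit B u \<longleftrightarrow> u \<in> B \<and> u \<noteq> 0 \<and> inverse u \<in> B"

definition well_centered :: "'k::field set \<Rightarrow> 'k set \<Rightarrow> bool" where
  "well_centered A B \<longleftrightarrow> (\<forall>b\<in>B. \<exists>u. ring_unit B u \<and> u * b \<in> A)"

definition almost_well_centered :: "'k::field set \<Rightarrow> 'k set \<Rightarrow> bool" where
  "almost_well_centered A B \<longleftrightarrow>
     (\<forall>b\<in>B. \<exists>n::nat. \<exists>u. n > 0 \<and> ring_unit B u \<and> u * b ^ n \<in> A)"

end

theory Submission
  imports Defs
begin

lemma sr_0: "is_subring A \<Longrightarrow> 0 \<in> A" by (simp add: is_subring_def)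
lemma sr_1: "is_subring A \<Longrightarrow> 1 \<in> A" by (simp add: is_subring_def)
lemma sr_add: "is_subring A \<Longrightarrow> x \<in> A \<Longrightarrow> y \<in> A \<Longrightarrow> x + y \<in> A" by (simp add: is_subring_def)
lemma sr_diff: "is_subring A \<Longrightarrow> x \<in> A \<Longrightarrow> y \<in> A \<Longrightarrow> x - y \<in> A" by (simp add: is_subring_def)
lemma sr_mult: "is_subring A \<Longrightarrow> x \<in> A \<Longrightarrow> y \<in> A \<Longrightarrow> x * y \<in> A" by (simp add: is_subring_def)
lemma sr_neg: "is_subring A \<Longrightarrow> x \<in> A \<Longrightarrow> - x \<in> A"
  using sr_diff[of A 0 x] sr_0[of A] by simp
lemma sr_pow: "is_subring A \<Longrightarrow> x \<in> A \<Longrightarrow> x ^ n \<in> A"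
  by (induction n) (auto intro: sr_mult sr_1)
lemma sr_of_nat: "is_subring A \<Longrightarrow> of_nat n \<in> A"
  by (induction n) (auto intro: sr_add sr_1 sr_0)
lemma sr_sum: "is_subring A \<Longrightarrow> (\<And>i. i \<in> S \<Longrightarrow> f i \<in> A) \<Longrightarrow> sum f S \<in> A"
  by (induction S rule: infinite_finite_induct) (auto intro: sr_add sr_0)

lemma id_sub: "is_ideal A I \<Longrightarrow> x \<in> I \<Longrightarrow> x \<in> A" by (auto simp: is_ideal_def)
lemma id_0: "is_ideal A I \<Longrightarrow> 0 \<in> I" by (auto simp: is_ideal_def)
lemma id_add: "is_ideal A I \<Longrightarrow> x \<in> I \<Longrightarrow> y \<in> I \<Longrightarrow> x + y \<in> I" by (auto simp: is_ideal_def)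
lemma id_multl: "is_ideal A I \<Longrightarrow> a \<in> A \<Longrightarrow> x \<in> I \<Longrightarrow> a * x \<in> I" by (auto simp: is_ideal_def)
lemma id_multr: "is_ideal A I \<Longrightarrow> a \<in> A \<Longrightarrow> x \<in> I \<Longrightarrow> x * a \<in> I"
  using id_multl[of A I a x] by (simp add: mult.commute)
lemma id_neg: "is_subring A \<Longrightarrow> is_ideal A I \<Longrightarrow> x \<in> I \<Longrightarrow> - x \<in> I"
  using id_multl[of A I "-1" x] sr_neg[OF _ sr_1] by force
lemma id_diff: "is_subring A \<Longrightarrow> is_ideal A I \<Longrightarrow> x \<in> I \<Longrightarrow> y \<in> I \<Longrightarrow> x - y \<in> I"
  using id_add[of A I x "-y"] id_neg by force
lemma id_sum: "is_ideal A I \<Longrightarrow> (\<And>i. i \<in> S \<Longrightarrow> f i \<in> I) \<Longrightarrow> sum f S \<in> I"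
  by (induction S rule: infinite_finite_induct) (auto intro: id_add id_0)
lemma id_one: "is_ideal A I \<Longrightarrow> 1 \<in> I \<Longrightarrow> x \<in> A \<Longrightarrow> x \<in> I"
  using id_multl[of A I x 1] by simp

definition prime_id :: "'k::field set \<Rightarrow> 'k set \<Rightarrow> bool" where
  "prime_id A P \<longleftrightarrow> is_ideal A P \<and> 1 \<notin> P \<and> (\<forall>a\<in>A. \<forall>b\<in>A. a * b \<in> P \<longrightarrow> a \<in> P \<or> b \<in> P)"

definition rad :: "'k::field set \<Rightarrow> 'k set \<Rightarrow> 'k set" where
  "rad A I = {x \<in> A. \<exists>m. x ^ m \<in> I}"

definition sumI :: "'k::field set \<Rightarrow> 'k set \<Rightarrow> 'k \<Rightarrow> 'k set" where
  "sumI A M a = {m + a * r | m r. m \<in> M \<and> r \<in> A}"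

lemma prime_mult: "prime_id A P \<Longrightarrow> a \<in> A \<Longrightarrow> b \<in> A \<Longrightarrow> a \<notin> P \<Longrightarrow> b \<notin> P \<Longrightarrow> a * b \<notin> P"
  by (auto simp: prime_id_def)

lemma prime_pow: "is_subring A \<Longrightarrow> prime_id A P \<Longrightarrow> a \<in> A \<Longrightarrow> a \<notin> P \<Longrightarrow> a ^ n \<notin> P"
proof (induction n)
  case 0 then show ?case by (simp add: prime_id_def)
next
  case (Suc n) then show ?case using prime_mult[of A P a "a^n"] sr_pow by auto
qed

lemma prime_pow_in: "is_subring A \<Longrightarrow> prime_id A P \<Longrightarrow> a \<in> A \<Longrightarrow> a ^ n \<in> P \<Longrightarrow> a \<in> P"
  using prime_pow by blast

lemma prime_ideal: "prime_id A P \<Longrightarrow> is_ideal A P" by (simp add: prime_id_def)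

lemma pow_in_ideal: "is_subring A \<Longrightarrow> is_ideal A I \<Longrightarrow> x \<in> A \<Longrightarrow> x ^ m \<in> I \<Longrightarrow> m \<le> n \<Longrightarrow> x ^ n \<in> I"
proof -
  assume a: "is_subring A" "is_ideal A I" "x \<in> A" "x ^ m \<in> I" "m \<le> n"
  then have "x ^ n = x ^ (n - m) * x ^ m" by (simp add: power_add[symmetric])
  then show ?thesis using a id_multl sr_pow by metis
qed

lemma rad_ideal:
  assumes A: "is_subring A" and I: "is_ideal A I"
  shows "radical_ideal A (rad A I)"
proof -
  have sub: "rad A I \<subseteq> A" by (auto simp: rad_def)
  have z: "0 \<in> rad A I" using A I id_0[OF I] by (auto simp: rad_def sr_0 intro!: exI[of _ 1])
  have add: "x + y \<in> rad A I" if x: "x \<in> rad A I" and y: "y \<in> rad A I" for x y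
  proof -
    obtain m where xA: "x \<in> A" and m: "x ^ m \<in> I" using x by (auto simp: rad_def)
    obtain l where yA: "y \<in> A" and l: "y ^ l \<in> I" using y by (auto simp: rad_def)
    have "(x + y) ^ (m + l) = (\<Sum>k\<le>m+l. of_nat ((m+l) choose k) * x ^ k * y ^ (m + l - k))"
      by (rule binomial_ring)
    also have "\<dots> \<in> I"
    proof (rule id_sum[OF I])
      fix k assume "k \<in> {..m+l}"
      show "of_nat ((m+l) choose k) * x ^ k * y ^ (m + l - k) \<in> I"
      proof (cases "m \<le> k")
        case True
        then have "x ^ k \<in> I" using pow_in_ideal[OF A I xA m] by simp
        then have "of_nat ((m+l) choose k) * x ^ k \<in> I" using id_multl[OF I] sr_of_nat[OF A] by blast
        then show ?thesis using id_multr[OF I] sr_pow[OF A yA] by blast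
      next
        case False
        then have "y ^ (m + l - k) \<in> I" using pow_in_ideal[OF A I yA l] by simp
        moreover have "of_nat ((m+l) choose k) * x ^ k \<in> A" using sr_mult[OF A] sr_of_nat[OF A] sr_pow[OF A xA] by blast
        ultimately show ?thesis using id_multl[OF I] by blast
      qed
    qed
    finally show ?thesis using xA yA sr_add[OF A] by (auto simp: rad_def)
  qed
  have mul: "a * x \<in> rad A I" if a: "a \<in> A" and x: "x \<in> rad A I" for a x
  proof -
    obtain m where xA: "x \<in> A" and m: "x ^ m \<in> I" using x by (auto simp: rad_def)
    have "(a * x) ^ m = a ^ m * x ^ m" by (simp add: power_mult_distrib)
    then have "(a * x) ^ m \<in> I" using id_multl[OF I] sr_pow[OF A a] m by metis
    then show ?thesis using sr_mult[OF A a xA] by (auto simp: rad_def)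
  qed
  have radp: "x \<in> rad A I" if "x \<in> A" "x ^ n \<in> rad A I" for x n
  proof -
    from that(2) obtain m where "(x ^ n) ^ m \<in> I" unfolding rad_def by blast
    then have "x ^ (n * m) \<in> I" by (simp add: power_mult)
    then show ?thesis using that by (auto simp: rad_def)
  qed
  show ?thesis unfolding radical_ideal_def is_ideal_def using sub z add mul radp by blast
qed

lemma rad_sup: "is_ideal A I \<Longrightarrow> I \<subseteq> rad A I"
  by (auto simp: rad_def id_sub intro: exI[of _ 1])

lemma sumI_ideal:
  assumes A: "is_subring A" and M: "is_ideal A M" and a: "a \<in> A"
  shows "is_ideal A (sumI A M a)" "M \<subseteq> sumI A M a" "a \<in> sumI A M a"
proof -
  show "is_ideal A (sumI A M a)"
    unfolding is_ideal_def
  proof (intro conjI ballI)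
    show "sumI A M a \<subseteq> A"
    proof
      fix x assume "x \<in> sumI A M a"
      then obtain m r where "m \<in> M" "r \<in> A" "x = m + a * r" by (auto simp: sumI_def)
      then show "x \<in> A" using sr_add[OF A] sr_mult[OF A] id_sub[OF M] a by metis
    qed
    show "0 \<in> sumI A M a" unfolding sumI_def using id_0[OF M] sr_0[OF A] by force
    fix x y assume x: "x \<in> sumI A M a" and y: "y \<in> sumI A M a"
    obtain m r where "m \<in> M" "r \<in> A" "x = m + a * r" using x by (auto simp: sumI_def)
    moreover obtain m' r' where "m' \<in> M" "r' \<in> A" "y = m' + a * r'" using y by (auto simp: sumI_def)
    ultimately have "x + y = (m + m') + a * (r + r')" "m + m' \<in> M" "r + r' \<in> A"
      using id_add[OF M] sr_add[OF A] by (auto simp: algebra_simps)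
    then show "x + y \<in> sumI A M a" unfolding sumI_def by blast
  next
    fix b x assume b: "b \<in> A" and x: "x \<in> sumI A M a"
    obtain m r where "m \<in> M" "r \<in> A" "x = m + a * r" using x by (auto simp: sumI_def)
    then have "b * x = b * m + a * (b * r)" "b * m \<in> M" "b * r \<in> A"
      using id_multl[OF M b] sr_mult[OF A b] by (auto simp: algebra_simps)[1] (use \<open>m \<in> M\<close> id_multl[OF M b] in blast, use \<open>r \<in> A\<close> sr_mult[OF A b] in blast)
    then show "b * x \<in> sumI A M a" unfolding sumI_def by blast
  qed
  show "M \<subseteq> sumI A M a" unfolding sumI_def using sr_0[OF A] by force
  show "a \<in> sumI A M a" unfolding sumI_def using id_0[OF M] sr_1[OF A] by force
qed

lemma sumI_prod:
  assumes A: "is_subring A" and M: "is_ideal A M" and a: "a \<in> A" and b: "b \<in> A"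
    and ab: "a * b \<in> M" and x: "x \<in> sumI A M a" and y: "y \<in> sumI A M b"
  shows "x * y \<in> M"
proof -
  obtain m r where m: "m \<in> M" "r \<in> A" "x = m + a * r" using x by (auto simp: sumI_def)
  obtain m' r' where m': "m' \<in> M" "r' \<in> A" "y = m' + b * r'" using y by (auto simp: sumI_def)
  have "x * y = m * y + (a * r) * m' + (a * b) * (r * r')" using m m' by (simp add: algebra_simps)
  moreover have "y \<in> A" using id_sub[OF sumI_ideal(1)[OF A M b] y] .
  ultimately show ?thesis using m m' ab id_add[OF M] id_multr[OF M] id_multl[OF M] sr_mult[OF A] a
    by metis
qed



lemma acc_max:
  assumes N: "noetherian_spectrum A" and F: "F \<noteq> {}" and R: "\<forall>J\<in>F. radical_ideal A J"
  shows "\<exists>M\<in>F. \<forall>J\<in>F. M \<subseteq> J \<longrightarrow> J = M"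
proof (rule ccontr)
  assume "\<not> ?thesis"
  then have step: "\<forall>M\<in>F. \<exists>J\<in>F. M \<subset> J" by auto
  define g where "g M = (SOME J. J \<in> F \<and> M \<subset> J)" for M
  have g: "g M \<in> F \<and> M \<subset> g M" if "M \<in> F" for M
  proof -
    have "\<exists>J. J \<in> F \<and> M \<subset> J" using step that by blast
    then show ?thesis unfolding g_def by (rule someI_ex)
  qed
  obtain M0 where M0: "M0 \<in> F" using F by blast
  define f where "f n = (g ^^ n) M0" for n
  have fF: "f n \<in> F" for n
  proof (induction n)
    case 0 then show ?case by (simp add: f_def M0)
  next
    case (Suc n) then show ?case using g[of "f n"] by (simp add: f_def)
  qed
  have fs: "f n \<subset> f (Suc n)" for n
    using g[OF fF[of n]] by (simp add: f_def)
  have "\<exists>N. \<forall>n\<ge>N. f n = f N"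
  proof (rule N[unfolded noetherian_spectrum_def, rule_format, of f], intro conjI allI)
    fix n show "radical_ideal A (f n)" using fF R by blast
    show "f n \<subseteq> f (Suc n)" using fs[of n] by blast
  qed
  then obtain N where "\<forall>n\<ge>N. f n = f N" by blast
  then have "f (Suc N) = f N" by (rule allE[where x="Suc N"]) auto
  with fs[of N] show False by blast
qed
lemma prime_exists:
  assumes A: "is_subring A" and N: "noetherian_spectrum A" and I: "is_ideal A I"
    and v: "v \<in> A" and dis: "\<forall>k. v ^ k \<notin> I"
  shows "\<exists>P. prime_id A P \<and> I \<subseteq> P \<and> (\<forall>k. v ^ k \<notin> P)"
proof -
  define F where "F = {J. radical_ideal A J \<and> I \<subseteq> J \<and> (\<forall>k. v ^ k \<notin> J)}"
  have "rad A I \<in> F"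
  proof -
    have "v ^ k \<notin> rad A I" for k
    proof
      assume "v ^ k \<in> rad A I"
      then obtain m where "(v ^ k) ^ m \<in> I" by (auto simp: rad_def)
      then show False using dis by (simp add: power_mult[symmetric])
    qed
    then show ?thesis unfolding F_def using rad_ideal[OF A I] rad_sup[OF I] by blast
  qed
  then have Fne: "F \<noteq> {}" by blast
  have Frad: "\<forall>J\<in>F. radical_ideal A J" unfolding F_def by blast
  obtain M where M: "M \<in> F" and Mmax: "\<forall>J\<in>F. M \<subseteq> J \<longrightarrow> J = M"
    using acc_max[OF N Fne Frad] by blast
  have Mr: "radical_ideal A M" and IM: "I \<subseteq> M" and Mv: "\<forall>k. v ^ k \<notin> M" using M unfolding F_def by blast+
  have Mi: "is_ideal A M" using Mr by (simp add: radical_ideal_def)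
  have one: "1 \<notin> M" using Mv by (metis power_0)
  have pr: "a \<in> M \<or> b \<in> M" if a: "a \<in> A" and b: "b \<in> A" and ab: "a * b \<in> M" for a b
  proof (rule ccontr)
    assume nab: "\<not> (a \<in> M \<or> b \<in> M)"
    have ex: "\<exists>k. v ^ k \<in> sumI A M c" if c: "c \<in> A" "c \<notin> M" for c
    proof -
      let ?J = "rad A (sumI A M c)"
      have Ji: "is_ideal A (sumI A M c)" using sumI_ideal[OF A Mi c(1)] by simp
      have "M \<subseteq> ?J" using sumI_ideal(2)[OF A Mi c(1)] rad_sup[OF Ji] by blast
      moreover have "c \<in> ?J" using sumI_ideal(3)[OF A Mi c(1)] rad_sup[OF Ji] by blast
      ultimately have "?J \<notin> F" using Mmax c(2) by blast
      moreover have "radical_ideal A ?J" using rad_ideal[OF A Ji] .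
      moreover have "I \<subseteq> ?J" using IM \<open>M \<subseteq> ?J\<close> by blast
      ultimately obtain k where "v ^ k \<in> ?J" unfolding F_def by blast
      then obtain m where "(v ^ k) ^ m \<in> sumI A M c" by (auto simp: rad_def)
      then show ?thesis by (metis power_mult)
    qed
    obtain k where k: "v ^ k \<in> sumI A M a" using ex a nab by blast
    obtain l where l: "v ^ l \<in> sumI A M b" using ex b nab by blast
    have "v ^ k * v ^ l \<in> M" using sumI_prod[OF A Mi a b ab k l] .
    then have "v ^ (k + l) \<in> M" by (simp add: power_add)
    then show False using Mv by blast
  qed
  have "prime_id A M" unfolding prime_id_def using Mi one pr by blast
  then show ?thesis using IM Mv by blast
qed

definition repr :: "'k::field set \<Rightarrow> 'k set \<Rightarrow> bool" where
  "repr A J \<longleftrightarrow> (\<exists>Ps. finite Ps \<and> (\<forall>P\<in>Ps. prime_id A P) \<and> J = A \<inter> \<Inter>Ps)"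

lemma radical_repr:
  assumes A: "is_subring A" and N: "noetherian_spectrum A" and J: "radical_ideal A J"
  shows "repr A J"
proof (rule ccontr)
  assume nJ: "\<not> repr A J"
  define F where "F = {J. radical_ideal A J \<and> \<not> repr A J}"
  have Fne: "F \<noteq> {}" using J nJ unfolding F_def by blast
  have Frad: "\<forall>J\<in>F. radical_ideal A J" unfolding F_def by blast
  obtain M where M: "M \<in> F" and Mmax: "\<forall>J\<in>F. M \<subseteq> J \<longrightarrow> J = M"
    using acc_max[OF N Fne Frad] by blast
  have Mr: "radical_ideal A M" and nM: "\<not> repr A M" using M unfolding F_def by blast+
  have Mi: "is_ideal A M" using Mr by (simp add: radical_ideal_def)
  have MA: "M \<subseteq> A" using Mi by (simp add: is_ideal_def)
  have one: "1 \<notin> M"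
  proof
    assume "1 \<in> M"
    then have "M = A" using id_one[OF Mi] MA by blast
    then have "repr A M" unfolding repr_def by (intro exI[of _ "{}"]) auto
    with nM show False by simp
  qed
  have "\<not> prime_id A M"
  proof
    assume "prime_id A M"
    then have "repr A M" unfolding repr_def using MA by (intro exI[of _ "{M}"]) auto
    with nM show False by simp
  qed
  then obtain a b where a: "a \<in> A" and b: "b \<in> A" and ab: "a * b \<in> M" and na: "a \<notin> M" and nb: "b \<notin> M"
    using Mi one unfolding prime_id_def by blast
  have rp: "repr A (rad A (sumI A M c))" if c: "c \<in> A" "c \<notin> M" for c
  proof -
    let ?J = "rad A (sumI A M c)"
    have Ji: "is_ideal A (sumI A M c)" using sumI_ideal[OF A Mi c(1)] by simp
    have "M \<subseteq> ?J" using sumI_ideal(2)[OF A Mi c(1)] rad_sup[OF Ji] by blast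
    moreover have "c \<in> ?J" using sumI_ideal(3)[OF A Mi c(1)] rad_sup[OF Ji] by blast
    ultimately have "?J \<notin> F" using Mmax c(2) by blast
    moreover have "radical_ideal A ?J" using rad_ideal[OF A Ji] .
    ultimately show ?thesis unfolding F_def by blast
  qed
  obtain Pa where Pa: "finite Pa" "\<forall>P\<in>Pa. prime_id A P" "rad A (sumI A M a) = A \<inter> \<Inter>Pa"
    using rp[OF a na] unfolding repr_def by blast
  obtain Pb where Pb: "finite Pb" "\<forall>P\<in>Pb. prime_id A P" "rad A (sumI A M b) = A \<inter> \<Inter>Pb"
    using rp[OF b nb] unfolding repr_def by blast
  have "M = A \<inter> \<Inter>(Pa \<union> Pb)"
  proof
    have Mi_a: "is_ideal A (sumI A M a)" using sumI_ideal[OF A Mi a] by simp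
    have Mi_b: "is_ideal A (sumI A M b)" using sumI_ideal[OF A Mi b] by simp
    have "M \<subseteq> rad A (sumI A M a)" using sumI_ideal(2)[OF A Mi a] rad_sup[OF Mi_a] by blast
    moreover have "M \<subseteq> rad A (sumI A M b)" using sumI_ideal(2)[OF A Mi b] rad_sup[OF Mi_b] by blast
    ultimately show "M \<subseteq> A \<inter> \<Inter>(Pa \<union> Pb)" using Pa(3) Pb(3) by blast
  next
    show "A \<inter> \<Inter>(Pa \<union> Pb) \<subseteq> M"
    proof
      fix x assume x: "x \<in> A \<inter> \<Inter>(Pa \<union> Pb)"
      then have "x \<in> rad A (sumI A M a)" "x \<in> rad A (sumI A M b)" using Pa(3) Pb(3) by auto
      then obtain m l where m: "x ^ m \<in> sumI A M a" and l: "x ^ l \<in> sumI A M b" by (auto simp: rad_def)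
      have "x ^ m * x ^ l \<in> M" using sumI_prod[OF A Mi a b ab m l] .
      then have "x ^ (m + l) \<in> M" by (simp add: power_add)
      then show "x \<in> M" using Mr x unfolding radical_ideal_def by blast
    qed
  qed
  then have "repr A M" unfolding repr_def using Pa Pb by (intro exI[of _ "Pa \<union> Pb"]) auto
  with nM show False by simp
qed

lemma avoid_aux:
  assumes A: "is_subring A" and Q: "prime_id A Q"
  shows "finite Ps \<Longrightarrow> (\<forall>P\<in>Ps. prime_id A P \<and> \<not> P \<subseteq> Q) \<Longrightarrow> \<exists>x\<in>A \<inter> \<Inter>Ps. x \<notin> Q"
proof (induction Ps rule: finite_induct)
  case empty then show ?case using sr_1[OF A] Q by (auto simp: prime_id_def)
next
  case (insert P Ps)
  then obtain x where x: "x \<in> A \<inter> \<Inter>Ps" "x \<notin> Q" by blast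
  obtain p where p: "p \<in> P" "p \<notin> Q" using insert by blast
  have PI: "is_ideal A P" using insert by (simp add: prime_id_def)
  have pA: "p \<in> A" using id_sub[OF PI p(1)] .
  have "x * p \<in> A" using sr_mult[OF A] x pA by blast
  moreover have "x * p \<in> P" using id_multl[OF PI] x p by blast
  moreover have "x * p \<in> P'" if "P' \<in> Ps" for P'
  proof -
    have "is_ideal A P'" using insert that by (simp add: prime_id_def)
    then show ?thesis using id_multr pA x that by blast
  qed
  moreover have "x * p \<notin> Q" using prime_mult[OF Q] x p pA by blast
  ultimately show ?case by blast
qed

lemma avoid:
  assumes A: "is_subring A" and Q: "prime_id A Q" and fin: "finite Ps"
    and Ps: "\<forall>P\<in>Ps. prime_id A P" and sub: "A \<inter> \<Inter>Ps \<subseteq> Q"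
  shows "\<exists>P\<in>Ps. P \<subseteq> Q"
  using avoid_aux[OF A Q fin] Ps sub by blast



definition Dn :: "'k::field set \<Rightarrow> 'k \<Rightarrow> 'k set" where
  "Dn A x = {d \<in> A. d * x \<in> A}"

definition loc :: "'k::field set \<Rightarrow> 'k set \<Rightarrow> 'k \<Rightarrow> bool" where
  "loc A P x \<longleftrightarrow> (\<exists>s\<in>A. s \<notin> P \<and> s * x \<in> A)"

lemma loc_Dn: "loc A P x \<longleftrightarrow> \<not> Dn A x \<subseteq> P"
  by (auto simp: loc_def Dn_def)

lemma Dn_ideal: assumes A: "is_subring A" shows "is_ideal A (Dn A x)"
  unfolding is_ideal_def Dn_def
proof (intro conjI ballI)
  show "0 \<in> {d \<in> A. d * x \<in> A}" using sr_0[OF A] by simp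
  fix u v assume "u \<in> {d \<in> A. d * x \<in> A}" "v \<in> {d \<in> A. d * x \<in> A}"
  then show "u + v \<in> {d \<in> A. d * x \<in> A}" using sr_add[OF A] by (simp add: distrib_right)
next
  fix a u assume "a \<in> A" "u \<in> {d \<in> A. d * x \<in> A}"
  then show "a * u \<in> {d \<in> A. d * x \<in> A}" using sr_mult[OF A] by (simp add: mult.assoc)
qed auto

lemma ideal_Int: "is_ideal A I \<Longrightarrow> is_ideal A J \<Longrightarrow> is_ideal A (I \<inter> J)"
  unfolding is_ideal_def by blast

lemma mod_span_gen:
  assumes A: "is_subring A" and a: "a \<in> S" shows "a \<in> mod_span A S"
  unfolding mod_span_def
  by (rule CollectI, rule exI[of _ "{a}"], rule exI[of _ "\<lambda>_. 1"]) (use a sr_1[OF A] in auto)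

lemma pruefer_crit:
  assumes FA: "frac_field_of A" and PA: "pruefer A"
  shows "\<exists>d1 d2. d1 \<in> A \<and> d1 * x \<in> A \<and> d2 \<in> A \<and> d2 * x \<in> A \<and> d1 + d2 * x = 1"
proof -
  have A: "is_subring A" using FA by (simp add: frac_field_of_def)
  obtain a b where a: "a \<in> A" and b: "b \<in> A" and b0: "b \<noteq> 0" and x: "x = a / b"
    using FA unfolding frac_field_of_def by blast
  define I where "I = mod_span A {a, b}"
  define C where "C = colon A I"
  have "invertible_ideal A I"
    using PA unfolding pruefer_def I_def using a b b0 by auto
  then have eq: "frac_mult A I C = A" by (simp add: invertible_ideal_def C_def)
  define C' where "C' = {z. z * a \<in> A \<and> z * b \<in> A}"
  define W where "W = {a * p + b * q | p q. p \<in> C' \<and> q \<in> C'}"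
  have C'0: "0 \<in> C'" using sr_0[OF A] by (simp add: C'_def)
  have C'add: "p + q \<in> C'" if "p \<in> C'" "q \<in> C'" for p q
    using that sr_add[OF A] by (simp add: C'_def distrib_right)
  have C'mul: "r * p \<in> C'" if "r \<in> A" "p \<in> C'" for r p
    using that sr_mult[OF A] by (simp add: C'_def mult.assoc)
  have W0: "0 \<in> W" unfolding W_def using C'0 by force
  have Wadd: "u + v \<in> W" if uW: "u \<in> W" and vW: "v \<in> W" for u v
  proof -
    obtain p q where "p \<in> C'" "q \<in> C'" "u = a * p + b * q" using uW by (auto simp: W_def)
    moreover obtain p' q' where "p' \<in> C'" "q' \<in> C'" "v = a * p' + b * q'" using vW by (auto simp: W_def)
    ultimately have "u + v = a * (p + p') + b * (q + q')" "p + p' \<in> C'" "q + q' \<in> C'"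
      using C'add by (auto simp: algebra_simps)
    then show ?thesis unfolding W_def by blast
  qed
  have Wmul: "r * u \<in> W" if rA: "r \<in> A" and uW: "u \<in> W" for r u
  proof -
    obtain p q where "p \<in> C'" "q \<in> C'" "u = a * p + b * q" using uW by (auto simp: W_def)
    then have "r * u = a * (r * p) + b * (r * q)" "r * p \<in> C'" "r * q \<in> C'"
      using C'mul rA by (auto simp: algebra_simps) (metis C'mul mult.commute rA)+
    then show ?thesis unfolding W_def by blast
  qed
  have Wsum: "sum f G \<in> W" if "\<And>g. g \<in> G \<Longrightarrow> f g \<in> W" for f and G :: "'a set"
    using that by (induction G rule: infinite_finite_induct) (auto intro: W0 Wadd)
  have aI: "a \<in> I" and bI: "b \<in> I" unfolding I_def using mod_span_gen[OF A] by auto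
  have IC: "i * j \<in> W" if i: "i \<in> I" and j: "j \<in> C" for i j
  proof -
    have jC': "j \<in> C'" using j aI bI by (auto simp: C_def colon_def C'_def mult.commute)
    obtain F c where F: "finite F" "F \<subseteq> {a, b}" "\<forall>s\<in>F. c s \<in> A" and ieq: "i = (\<Sum>s\<in>F. c s * s)"
      using i unfolding I_def mod_span_def by blast
    have "i * j = (\<Sum>s\<in>F. c s * s * j)" by (simp add: ieq sum_distrib_right)
    also have "\<dots> \<in> W"
    proof (rule Wsum)
      fix s assume s: "s \<in> F"
      have cj: "c s * j \<in> C'" using C'mul F(3) s jC' by blast
      show "c s * s * j \<in> W"
      proof (cases "s = a")
        case True
        then have "c s * s * j = a * (c s * j) + b * 0" by simp
        then show ?thesis unfolding W_def using cj C'0 by blast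
      next
        case False
        then have "s = b" using s F(2) by blast
        then have "c s * s * j = a * 0 + b * (c s * j)" by simp
        then show ?thesis unfolding W_def using cj C'0 by blast
      qed
    qed
    finally show ?thesis .
  qed
  have "1 \<in> frac_mult A I C" using eq sr_1[OF A] by simp
  then obtain G c where G: "finite G" "G \<subseteq> {u * v | u v. u \<in> I \<and> v \<in> C}" "\<forall>s\<in>G. c s \<in> A"
    and oneq: "1 = (\<Sum>s\<in>G. c s * s)"
    unfolding frac_mult_def mod_span_def by blast
  have "(\<Sum>s\<in>G. c s * s) \<in> W"
  proof (rule Wsum)
    fix s assume s: "s \<in> G"
    then have "s \<in> W" using G(2) IC by blast
    then show "c s * s \<in> W" using Wmul G(3) s by blast
  qed
  then obtain p q where p: "p \<in> C'" and q: "q \<in> C'" and pq: "1 = a * p + b * q"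
    using oneq unfolding W_def by auto
  show ?thesis
  proof (intro exI conjI)
    show "b * q \<in> A" using q by (simp add: C'_def mult.commute)
    show "b * q * x \<in> A" using q b0 by (simp add: C'_def x mult.commute)
    show "b * p \<in> A" using p by (simp add: C'_def mult.commute)
    show "b * p * x \<in> A" using p b0 by (simp add: C'_def x mult.commute)
    show "b * q + b * p * x = 1" using pq b0 by (simp add: x algebra_simps)
  qed
qed



lemma loc_A: "prime_id A P \<Longrightarrow> is_subring A \<Longrightarrow> x \<in> A \<Longrightarrow> loc A P x"
  unfolding loc_def prime_id_def using sr_1 by fastforce

lemma loc_add: assumes A: "is_subring A" and P: "prime_id A P" and x: "loc A P x" and y: "loc A P y"
  shows "loc A P (x + y)" "loc A P (x - y)" "loc A P (x * y)"
proof -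
  obtain s where s: "s \<in> A" "s \<notin> P" "s * x \<in> A" using x by (auto simp: loc_def)
  obtain t where t: "t \<in> A" "t \<notin> P" "t * y \<in> A" using y by (auto simp: loc_def)
  have st: "s * t \<in> A" "s * t \<notin> P" using sr_mult[OF A] prime_mult[OF P] s t by auto
  have "s * t * (x + y) = t * (s * x) + s * (t * y)" by (simp add: algebra_simps)
  then have "s * t * (x + y) \<in> A" using sr_add[OF A] sr_mult[OF A] s t by metis
  then show "loc A P (x + y)" using st by (auto simp: loc_def)
  have "s * t * (x - y) = t * (s * x) - s * (t * y)" by (simp add: algebra_simps)
  then have "s * t * (x - y) \<in> A" using sr_diff[OF A] sr_mult[OF A] s t by metis
  then show "loc A P (x - y)" using st by (auto simp: loc_def)
  have "s * t * (x * y) = (s * x) * (t * y)" by (simp add: algebra_simps)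
  then have "s * t * (x * y) \<in> A" using sr_mult[OF A] s t by metis
  then show "loc A P (x * y)" using st by (auto simp: loc_def)
qed

lemma loc_pow: assumes A: "is_subring A" and P: "prime_id A P" and x: "loc A P x"
  shows "loc A P (x ^ n)"
proof (induction n)
  case 0 then show ?case using loc_A[OF P A sr_1[OF A]] by simp
next
  case (Suc n) then show ?case using loc_add(3)[OF A P x] by simp
qed

lemma loc_mono: "P \<subseteq> Q \<Longrightarrow> loc A Q x \<Longrightarrow> loc A P x"
  unfolding loc_def by blast

lemma V2:
  assumes FA: "frac_field_of A" and PA: "pruefer A" and P: "prime_id A P" and nl: "\<not> loc A P x"
  shows "\<exists>q. q \<in> P \<and> q * x \<in> A \<and> q * x \<notin> P"
proof -
  have A: "is_subring A" using FA by (simp add: frac_field_of_def)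
  obtain d1 d2 where d: "d1 \<in> A" "d1 * x \<in> A" "d2 \<in> A" "d2 * x \<in> A" "d1 + d2 * x = 1"
    using pruefer_crit[OF FA PA] by blast
  have "d1 \<in> P" using nl d unfolding loc_def by blast
  moreover have "d2 \<in> P" using nl d unfolding loc_def by blast
  moreover have "d2 * x \<notin> P"
  proof
    assume "d2 * x \<in> P"
    then have "d1 + d2 * x \<in> P" using id_add[OF prime_ideal[OF P]] \<open>d1 \<in> P\<close> by blast
    then show False using d(5) P by (simp add: prime_id_def)
  qed
  ultimately show ?thesis using d by blast
qed

lemma V34:
  assumes FA: "frac_field_of A" and PA: "pruefer A" and P: "prime_id A P" and nl: "\<not> loc A P z"
    and k: "1 \<le> k" and kk: "k < k'"
  shows "\<not> loc A P (z ^ k' - z ^ k)"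
proof
  have A: "is_subring A" using FA by (simp add: frac_field_of_def)
  have PI: "is_ideal A P" using prime_ideal[OF P] .
  obtain q where q: "q \<in> P" "q * z \<in> A" "q * z \<notin> P" using V2[OF FA PA P nl] by blast
  have qA: "q \<in> A" using id_sub[OF PI q(1)] .
  let ?r = "q * z"
  assume "loc A P (z ^ k' - z ^ k)"
  then obtain s where s: "s \<in> A" "s \<notin> P" "s * (z ^ k' - z ^ k) \<in> A" by (auto simp: loc_def)
  have qk': "q ^ k' \<in> P" using pow_in_ideal[OF A PI qA, of 1 k'] q(1) kk by simp
  have e1: "q ^ k' * (s * (z ^ k' - z ^ k)) \<in> P" using id_multr[OF PI s(3) qk'] .
  have "q ^ k' * (s * (z ^ k' - z ^ k)) = s * ?r ^ k' - s * ?r ^ k * q ^ (k' - k)"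
  proof -
    have "q ^ k' = q ^ k * q ^ (k' - k)" using kk by (simp add: power_add[symmetric])
    then show ?thesis by (simp add: algebra_simps power_mult_distrib)
  qed
  moreover have "s * ?r ^ k * q ^ (k' - k) \<in> P"
  proof -
    have "q ^ (k' - k) \<in> P" using pow_in_ideal[OF A PI qA, of 1 "k' - k"] q(1) kk by simp
    then show ?thesis using id_multl[OF PI] sr_mult[OF A] s(1) sr_pow[OF A q(2)] by blast
  qed
  ultimately have "s * ?r ^ k' \<in> P" using e1 id_add[OF PI] by (metis diff_add_cancel)
  moreover have "s * ?r ^ k' \<notin> P"
    using prime_mult[OF P s(1) sr_pow[OF A q(2)] s(2) prime_pow[OF A P q(2) q(3)]] .
  ultimately show False by blast
qed

lemma V3:
  assumes FA: "frac_field_of A" and PA: "pruefer A" and P: "prime_id A P" and nl: "\<not> loc A P z"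
    and k: "1 \<le> k"
  shows "\<not> loc A P (z ^ k)"
proof
  have A: "is_subring A" using FA by (simp add: frac_field_of_def)
  have PI: "is_ideal A P" using prime_ideal[OF P] .
  obtain q where q: "q \<in> P" "q * z \<in> A" "q * z \<notin> P" using V2[OF FA PA P nl] by blast
  have qA: "q \<in> A" using id_sub[OF PI q(1)] .
  assume "loc A P (z ^ k)"
  then obtain s where s: "s \<in> A" "s \<notin> P" "s * z ^ k \<in> A" by (auto simp: loc_def)
  have qk: "q ^ k \<in> P" using pow_in_ideal[OF A PI qA, of 1 k] q(1) k by simp
  have "q ^ k * (s * z ^ k) \<in> P" using id_multr[OF PI s(3) qk] .
  moreover have "q ^ k * (s * z ^ k) = s * (q * z) ^ k" by (simp add: algebra_simps power_mult_distrib)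
  moreover have "s * (q * z) ^ k \<notin> P"
    using prime_mult[OF P s(1) sr_pow[OF A q(2)] s(2) prime_pow[OF A P q(2) q(3)]] .
  ultimately show False by simp
qed

lemma bad_unique:
  assumes FA: "frac_field_of A" and PA: "pruefer A" and P: "prime_id A P"
    and nl: "\<not> loc A P y \<or> \<not> loc A P z"
    and k: "1 \<le> k" and k': "1 \<le> k'" and l1: "loc A P (y + z ^ k)" and l2: "loc A P (y + z ^ k')"
  shows "k = k'"
proof -
  have A: "is_subring A" using FA by (simp add: frac_field_of_def)
  show ?thesis
  proof (cases "loc A P z")
    case True
    then have "loc A P y" using loc_add(2)[OF A P l1 loc_pow[OF A P True, of k]] by simp
    with nl True show ?thesis by blast
  next
    case False
    show ?thesis
    proof (rule ccontr)
      assume "k \<noteq> k'"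
      then have "k < k' \<or> k' < k" by arith
      then show False
      proof
        assume kk: "k < k'"
        have "loc A P ((y + z ^ k') - (y + z ^ k))" using loc_add(2)[OF A P l2 l1] .
        then show False using V34[OF FA PA P False k kk] by simp
      next
        assume kk: "k' < k"
        have "loc A P ((y + z ^ k) - (y + z ^ k'))" using loc_add(2)[OF A P l1 l2] .
        then show False using V34[OF FA PA P False k' kk] by simp
      qed
    qed
  qed
qed



lemma subsingleton_finite: "(\<And>a b. a \<in> S \<Longrightarrow> b \<in> S \<Longrightarrow> a = b) \<Longrightarrow> finite S"
proof (cases "S = {}")
  case False
  then obtain k where "k \<in> S" by blast
  moreover assume "\<And>a b. a \<in> S \<Longrightarrow> b \<in> S \<Longrightarrow> a = b"
  ultimately have "S \<subseteq> {k}" by blast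
  then show ?thesis using finite_subset by blast
qed simp

lemma pair:
  assumes FA: "frac_field_of A" and PA: "pruefer A" and N: "noetherian_spectrum A"
  shows "\<exists>k\<ge>1. \<forall>Q. prime_id A Q \<and> (\<not> loc A Q y \<or> \<not> loc A Q z) \<longrightarrow> \<not> loc A Q (y + z ^ k)"
proof -
  have A: "is_subring A" using FA by (simp add: frac_field_of_def)
  let ?I = "Dn A y \<inter> Dn A z"
  have Ii: "is_ideal A ?I" using ideal_Int Dn_ideal[OF A] by blast
  obtain Ps where Ps: "finite Ps" "\<forall>P\<in>Ps. prime_id A P" and Req: "rad A ?I = A \<inter> \<Inter>Ps"
    using radical_repr[OF A N rad_ideal[OF A Ii]] unfolding repr_def by blast
  have inPs: "\<not> loc A P y \<or> \<not> loc A P z" if P: "P \<in> Ps" for P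
  proof (rule ccontr)
    assume "\<not> (\<not> loc A P y \<or> \<not> loc A P z)"
    then obtain s t where s: "s \<in> Dn A y" "s \<notin> P" and t: "t \<in> Dn A z" "t \<notin> P"
      unfolding loc_Dn by blast
    have Pp: "prime_id A P" using Ps P by blast
    have sA: "s \<in> A" and tA: "t \<in> A" using s t by (auto simp: Dn_def)
    have "s * t \<in> ?I" using id_multr[OF Dn_ideal[OF A] tA s(1)] id_multl[OF Dn_ideal[OF A] sA t(1)] by blast
    then have "s * t \<in> rad A ?I" using rad_sup[OF Ii] by blast
    then have "s * t \<in> P" using Req P by blast
    then show False using prime_mult[OF Pp sA tA s(2) t(2)] by blast
  qed
  define Bad where "Bad = (\<Union>P\<in>Ps. {k. 1 \<le> k \<and> loc A P (y + z ^ k)})"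
  have "finite Bad"
    unfolding Bad_def
  proof (rule finite_UN_I[OF Ps(1)])
    fix P assume P: "P \<in> Ps"
    show "finite {k. 1 \<le> k \<and> loc A P (y + z ^ k)}"
      by (rule subsingleton_finite) (use bad_unique[OF FA PA _ inPs[OF P]] Ps(2) P in blast)
  qed
  then obtain k where k: "k \<notin> Bad \<union> {0}" using ex_new_if_finite[OF infinite_UNIV_nat] by blast
  have k1: "1 \<le> k" using k by auto
  show ?thesis
  proof (intro exI[of _ k] conjI allI impI k1)
    fix Q assume Q: "prime_id A Q \<and> (\<not> loc A Q y \<or> \<not> loc A Q z)"
    have "?I \<subseteq> Q" using Q unfolding loc_Dn by blast
    have "A \<inter> \<Inter>Ps \<subseteq> Q"
    proof
      fix x assume "x \<in> A \<inter> \<Inter>Ps"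
      then have "x \<in> rad A ?I" using Req by blast
      then obtain m where xA: "x \<in> A" and m: "x ^ m \<in> ?I" by (auto simp: rad_def)
      then show "x \<in> Q" using prime_pow_in[OF A _ xA] Q \<open>?I \<subseteq> Q\<close> by blast
    qed
    then obtain P where P: "P \<in> Ps" "P \<subseteq> Q" using avoid[OF A _ Ps(1) Ps(2)] Q by blast
    have "\<not> loc A P (y + z ^ k)" using k k1 P(1) unfolding Bad_def by blast
    then show "\<not> loc A Q (y + z ^ k)" using loc_mono[OF P(2)] by blast
  qed
qed

lemma gen_b:
  assumes FA: "frac_field_of A" and PA: "pruefer A" and N: "noetherian_spectrum A"
    and B: "is_subring B" and G: "finite G"
  shows "G \<subseteq> B \<Longrightarrow> \<exists>b\<in>B. \<forall>Q. prime_id A Q \<and> (\<exists>y\<in>G. \<not> loc A Q y) \<longrightarrow> \<not> loc A Q b"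
  using G
proof (induction G rule: finite_induct)
  case empty then show ?case using sr_0[OF B] by blast
next
  case (insert y G)
  then obtain b where b: "b \<in> B" and bp: "\<forall>Q. prime_id A Q \<and> (\<exists>y\<in>G. \<not> loc A Q y) \<longrightarrow> \<not> loc A Q b"
    by blast
  obtain k where k: "\<forall>Q. prime_id A Q \<and> (\<not> loc A Q b \<or> \<not> loc A Q y) \<longrightarrow> \<not> loc A Q (b + y ^ k)"
    using pair[OF FA PA N, of b y] by blast
  have "b + y ^ k \<in> B" using sr_add[OF B b sr_pow[OF B]] insert by blast
  moreover have "\<forall>Q. prime_id A Q \<and> (\<exists>y'\<in>insert y G. \<not> loc A Q y') \<longrightarrow> \<not> loc A Q (b + y ^ k)"
    using k bp by blast
  ultimately show ?case by blast
qed

lemma reduction: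
  assumes A: "is_subring A" and P: "prime_id A P" and x: "x \<in> ring_gen (A \<union> F)" and nl: "\<not> loc A P x"
  shows "\<exists>y\<in>F. \<not> loc A P y"
proof (rule ccontr)
  assume "\<not> ?thesis"
  then have Fl: "\<forall>y\<in>F. loc A P y" by blast
  let ?L = "{x. loc A P x}"
  have "is_subring ?L" unfolding is_subring_def
  proof (intro conjI ballI)
    show "0 \<in> ?L" using loc_A[OF P A sr_0[OF A]] by simp
    show "1 \<in> ?L" using loc_A[OF P A sr_1[OF A]] by simp
    fix u v assume "u \<in> ?L" "v \<in> ?L"
    then have "loc A P u" "loc A P v" by auto
    then show "u + v \<in> ?L" "u - v \<in> ?L" "u * v \<in> ?L" using loc_add[OF A P] by auto
  qed
  moreover have "A \<union> F \<subseteq> ?L" using Fl loc_A[OF P A] by auto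
  ultimately have "ring_gen (A \<union> F) \<subseteq> ?L" unfolding ring_gen_def by (rule Inter_lower[OF CollectI, OF conjI])
  then show False using x nl by blast
qed



theorem theorem4p5:
  fixes A B :: "'k::field set"
  assumes "frac_field_of A"
    and "pruefer A"
    and "noetherian_spectrum A"
    and "is_overring A B"
    and "fin_gen_algebra A B"
  shows "(is_localization A B \<longleftrightarrow> well_centered A B)
       \<and> (well_centered A B \<longleftrightarrow> almost_well_centered A B)"
proof -
  note FA = assms(1) and PA = assms(2) and N = assms(3)
  have A: "is_subring A" using FA by (simp add: frac_field_of_def)
  have B: "is_subring B" and AB: "A \<subseteq> B" using assms(4) by (auto simp: is_overring_def)
  obtain F where F: "finite F" "F \<subseteq> B" and Beq: "B = ring_gen (A \<union> F)"
    using assms(5) by (auto simp: fin_gen_algebra_def)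
  have LW: "well_centered A B" if L: "is_localization A B"
  proof -
    obtain S where S: "S \<subseteq> A - {0}" "1 \<in> S" and Beq2: "B = {a / s | a s. a \<in> A \<and> s \<in> S}"
      using L unfolding is_localization_def by blast
    show ?thesis unfolding well_centered_def
    proof
      fix b assume "b \<in> B"
      then obtain a s where a: "a \<in> A" and s: "s \<in> S" and bq: "b = a / s" using Beq2 by blast
      have s0: "s \<noteq> 0" and sA: "s \<in> A" using S s by auto
      have "s \<in> B" using Beq2 sA S(2) by force
      moreover have "inverse s \<in> B" using Beq2 s sr_1[OF A] by (force simp: divide_inverse)
      ultimately have "ring_unit B s" using s0 by (simp add: ring_unit_def)
      moreover have "s * b \<in> A" using a s0 by (simp add: bq)
      ultimately show "\<exists>u. ring_unit B u \<and> u * b \<in> A" by blast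
    qed
  qed
  have WAW: "almost_well_centered A B" if W: "well_centered A B"
    unfolding almost_well_centered_def
  proof
    fix b assume "b \<in> B"
    then obtain u where "ring_unit B u" "u * b \<in> A" using W unfolding well_centered_def by blast
    then show "\<exists>n::nat. \<exists>u. n > 0 \<and> ring_unit B u \<and> u * b ^ n \<in> A"
      by (intro exI[of _ "1::nat"]) auto
  qed
  have AWL: "is_localization A B" if AW: "almost_well_centered A B"
  proof -
    obtain b where b: "b \<in> B" and bp: "\<forall>Q. prime_id A Q \<and> (\<exists>y\<in>F. \<not> loc A Q y) \<longrightarrow> \<not> loc A Q b"
      using gen_b[OF FA PA N B F(1) F(2)] by blast
    have bp2: "\<not> loc A Q b" if Q: "prime_id A Q" and x: "x \<in> B" and nx: "\<not> loc A Q x" for Q x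
      using reduction[OF A Q _ nx] x Beq bp Q by blast
    obtain n u where n: "n > 0" and u: "ring_unit B u" and c: "u * b ^ n \<in> A"
      using AW b unfolding almost_well_centered_def by blast
    have uB: "u \<in> B" and u0: "u \<noteq> 0" and uiB: "inverse u \<in> B" using u by (auto simp: ring_unit_def)
    have uA: "u \<in> A"
    proof (rule ccontr)
      assume nu: "u \<notin> A"
      have "\<forall>k. (1::'k) ^ k \<notin> Dn A u" using nu by (simp add: Dn_def)
      then obtain P where P: "prime_id A P" and DP: "Dn A u \<subseteq> P"
        using prime_exists[OF A N Dn_ideal[OF A] sr_1[OF A]] by blast
      have nlu: "\<not> loc A P u" using DP by (simp add: loc_Dn)
      have nlb: "\<not> loc A P b" using bp2[OF P uB nlu] .
      obtain q where q: "q \<in> P" "q * u \<in> A" "q * u \<notin> P" using V2[OF FA PA P nlu] by blast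
      obtain q' where q': "q' \<in> P" "q' * b \<in> A" "q' * b \<notin> P" using V2[OF FA PA P nlb] by blast
      have PI: "is_ideal A P" using prime_ideal[OF P] .
      have q'A: "q' \<in> A" using id_sub[OF PI q'(1)] .
      have "(q * u) * (q' * b) ^ n = q * (q' ^ n * (u * b ^ n))" by (simp add: algebra_simps power_mult_distrib)
      moreover have "q * (q' ^ n * (u * b ^ n)) \<in> P"
        using id_multr[OF PI sr_mult[OF A sr_pow[OF A q'A] c] q(1)] .
      moreover have "(q * u) * (q' * b) ^ n \<notin> P"
        using prime_mult[OF P q(2) sr_pow[OF A q'(2)] q(3) prime_pow[OF A P q'(2) q'(3)]] .
      ultimately show False by metis
    qed
    have key: "\<exists>t. t \<in> A \<and> t \<noteq> 0 \<and> inverse t \<in> B \<and> t * x \<in> A" if x: "x \<in> B" for x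
    proof -
      have "\<exists>k. u ^ k \<in> Dn A x"
      proof (rule ccontr)
        assume "\<not> (\<exists>k. u ^ k \<in> Dn A x)"
        then obtain P where P: "prime_id A P" and DP: "Dn A x \<subseteq> P" and uP: "\<forall>k. u ^ k \<notin> P"
          using prime_exists[OF A N Dn_ideal[OF A] uA] by blast
        have nlx: "\<not> loc A P x" using DP by (simp add: loc_Dn)
        have nlb: "\<not> loc A P b" using bp2[OF P x nlx] .
        obtain q' where q': "q' \<in> P" "q' * b \<in> A" "q' * b \<notin> P" using V2[OF FA PA P nlb] by blast
        have PI: "is_ideal A P" using prime_ideal[OF P] .
        have q'A: "q' \<in> A" using id_sub[OF PI q'(1)] .
        have "(q' * b) ^ n * u = q' ^ n * (u * b ^ n)" by (simp add: algebra_simps power_mult_distrib)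
        moreover have "q' ^ n \<in> P" using pow_in_ideal[OF A PI q'A, of 1 n] q'(1) n by simp
        then have "q' ^ n * (u * b ^ n) \<in> P" using id_multr[OF PI c] by blast
        moreover have "u \<notin> P" using uP by (metis power_one_right)
        then have "(q' * b) ^ n * u \<notin> P"
          using prime_mult[OF P sr_pow[OF A q'(2)] uA prime_pow[OF A P q'(2) q'(3)]] by blast
        ultimately show False by metis
      qed
      then obtain k where k: "u ^ k \<in> A" "u ^ k * x \<in> A" by (auto simp: Dn_def)
      have "inverse (u ^ k) \<in> B" using sr_pow[OF B uiB, of k] by (simp add: power_inverse)
      then show ?thesis using k u0 by auto
    qed
    define S where "S = {t. t \<in> A \<and> t \<noteq> 0 \<and> inverse t \<in> B}"
    show ?thesis unfolding is_localization_def
    proof (intro exI[of _ S] conjI ballI)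
      show "S \<subseteq> A - {0}" by (auto simp: S_def)
      show "1 \<in> S" using sr_1[OF A] sr_1[OF B] by (simp add: S_def)
      fix s t assume "s \<in> S" "t \<in> S"
      then show "s * t \<in> S" using sr_mult[OF A] sr_mult[OF B] by (auto simp: S_def)
    next
      show "B = {a / s | a s. a \<in> A \<and> s \<in> S}"
      proof
        show "B \<subseteq> {a / s | a s. a \<in> A \<and> s \<in> S}"
        proof
          fix x assume "x \<in> B"
          then obtain t where t: "t \<in> A" "t \<noteq> 0" "inverse t \<in> B" "t * x \<in> A" using key by blast
          then have "x = (t * x) / t" by simp
          moreover have "t \<in> S" using t by (simp add: S_def)
          ultimately show "x \<in> {a / s | a s. a \<in> A \<and> s \<in> S}" using t(4) by blast
        qed
        show "{a / s | a s. a \<in> A \<and> s \<in> S} \<subseteq> B"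
        proof
          fix y assume "y \<in> {a / s | a s. a \<in> A \<and> s \<in> S}"
          then obtain a s where "a \<in> A" "s \<in> S" "y = a / s" by blast
          then show "y \<in> B" using sr_mult[OF B] AB by (auto simp: S_def divide_inverse)
        qed
      qed
    qed
  qed
  show ?thesis using LW WAW AWL by blast
qed


end
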